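(* Let $G$ be a group, $E$ a real Banach space, $f\colon G\to E$ a $(G;E)$-pseudo-Jensen function, and $b\in G$ an element of order two. Then $f(b^{-1}xb)=f(x)$ for all $x\in G$.
   Context: A function $f\colon G\to E$ is $(G;E)$-pseudo-Jensen if there is $c>0$ with $\|f(xy)+f(xy^{-1})-2f(x)\|\le c$ for all $x,y\in G$, and $f(x^n)=nf(x)$ for all $x\in G$, $n\in\mathbb{Z}$. *)

theory Defs
  imports "HOL-Analysis.Analysis" "HOL-Algebra.Algebra"
begin

definition pseudo_Jensen :: "('g, 'm) monoid_scheme \<Rightarrow> ('g \<Rightarrow> 'e::real_normed_vector) \<Rightarrow> bool" where
  "pseudo_Jensen G f \<longleftrightarrow>
     (\<exists>c>0. \<forall>x\<in>carrier G. \<forall>y\<in>carrier G.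
        norm (f (x \<otimes>\<^bsub>G\<^esub> y) + f (x \<otimes>\<^bsub>G\<^esub> inv\<^bsub>G\<^esub> y) - 2 *\<^sub>R f x) \<le> c) \<and>
     (\<forall>x\<in>carrier G. \<forall>n::int. f (x [^]\<^bsub>G\<^esub> n) = of_int n *\<^sub>R f x)"

end

theory Submission
  imports Defs
begin

theorem lemma3p13:
  fixes G (structure) and f :: "'g \<Rightarrow> 'e::banach" and b :: 'g
  assumes "group G"
    and "pseudo_Jensen G f"
    and "b \<in> carrier G"
    and "group.ord G b = 2"
  shows "\<forall>x\<in>carrier G. f (inv b \<otimes> x \<otimes> b) = f x"
proof
  interpret group G by (rule assms(1))
  have bG: "b \<in> carrier G" by (rule assms(3))
  obtain c where c: "c > 0"
    and J: "\<And>x y. x \<in> carrier G \<Longrightarrow> y \<in> carrier G \<Longrightarrow>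
        norm (f (x \<otimes> y) + f (x \<otimes> inv y) - 2 *\<^sub>R f x) \<le> c"
    and H: "\<And>x n. x \<in> carrier G \<Longrightarrow> f (x [^] (n::int)) = of_int n *\<^sub>R f x"
    using assms(2) unfolding pseudo_Jensen_def by blast
  have finv: "f (inv z) = - f z" if "z \<in> carrier G" for z
    using H[OF that, of "-1"] that by (simp add: int_pow_neg)
  have b2: "b \<otimes> b = \<one>"
    using pow_ord_eq_1[OF bG] assms(4) by (simp add: numeral_2_eq_2 bG)
  have ib: "inv b = b" using b2 bG by (metis inv_equality)
  have L: "norm (f (y \<otimes> x) + f (inv y \<otimes> x) - 2 *\<^sub>R f x) \<le> c"
    if x: "x \<in> carrier G" and y: "y \<in> carrier G" for x y
  proof -
    have "norm (f (inv x \<otimes> inv y) + f (inv x \<otimes> inv (inv y)) - 2 *\<^sub>R f (inv x)) \<le> c"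
      using J[of "inv x" "inv y"] x y by simp
    moreover have "f (inv x \<otimes> inv y) = - f (y \<otimes> x)"
      using finv[of "y \<otimes> x"] x y by (simp add: inv_mult_group)
    moreover have "f (inv x \<otimes> inv (inv y)) = - f (inv y \<otimes> x)"
      using finv[of "inv y \<otimes> x"] x y by (simp add: inv_mult_group)
    moreover have "f (inv x) = - f x" using finv x by simp
    ultimately have "norm (- (f (y \<otimes> x) + f (inv y \<otimes> x) - 2 *\<^sub>R f x)) \<le> c"
      by (simp add: algebra_simps)
    then show ?thesis by (simp only: norm_minus_cancel)
  qed
  have bound: "norm (f (inv b \<otimes> x \<otimes> b) - f x) \<le> c" if x: "x \<in> carrier G" for x
  proof -
    have "norm (f (b \<otimes> x \<otimes> b) + f (b \<otimes> x \<otimes> b) - 2 *\<^sub>R f (b \<otimes> x)) \<le> c"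
      using J[of "b \<otimes> x" b] x bG ib by simp
    hence 1: "norm (2 *\<^sub>R (f (b \<otimes> x \<otimes> b) - f (b \<otimes> x))) \<le> c"
      by (simp add: algebra_simps scaleR_2)
    have "norm (f (b \<otimes> x) + f (b \<otimes> x) - 2 *\<^sub>R f x) \<le> c"
      using L[of x b] x bG ib by simp
    hence 2: "norm (2 *\<^sub>R (f (b \<otimes> x) - f x)) \<le> c"
      by (simp add: algebra_simps scaleR_2)
    have "norm (f (b \<otimes> x \<otimes> b) - f x) \<le> norm (f (b \<otimes> x \<otimes> b) - f (b \<otimes> x)) + norm (f (b \<otimes> x) - f x)"
        using norm_triangle_ineq[of "f (b \<otimes> x \<otimes> b) - f (b \<otimes> x)" "f (b \<otimes> x) - f x"] by simp
    also have "\<dots> \<le> c/2 + c/2" using 1 2 by simp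
    finally show ?thesis using ib by simp
  qed
  have conjpow: "(inv b \<otimes> x \<otimes> b) [^] (n::nat) = inv b \<otimes> x [^] n \<otimes> b"
    if x: "x \<in> carrier G" for x n
  proof (induction n)
    case 0 then show ?case using bG by simp
  next
    case (Suc n)
    have "(inv b \<otimes> x \<otimes> b) [^] Suc n = (inv b \<otimes> x [^] n \<otimes> b) \<otimes> (inv b \<otimes> x \<otimes> b)"
      using Suc by simp
    also have "\<dots> = inv b \<otimes> (x [^] n \<otimes> (b \<otimes> inv b) \<otimes> x) \<otimes> b"
      using x bG by (simp only: m_assoc inv_closed nat_pow_closed m_closed)
    also have "\<dots> = inv b \<otimes> x [^] Suc n \<otimes> b"
      using x bG by (simp add: m_assoc nat_pow_Suc)
    finally show ?case .
  qed
  fix x assume x: "x \<in> carrier G"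
  define g where "g = f (inv b \<otimes> x \<otimes> b) - f x"
  have "real n * norm g \<le> c" for n :: nat
  proof -
    have "f ((inv b \<otimes> x \<otimes> b) [^] int n) - f (x [^] int n) = real n *\<^sub>R g"
      using H[of "inv b \<otimes> x \<otimes> b" "int n"] H[OF x, of "int n"] x bG
      by (simp add: g_def scaleR_diff_right)
    moreover have "norm (f (inv b \<otimes> x [^] n \<otimes> b) - f (x [^] n)) \<le> c"
      using bound x by simp
    ultimately show ?thesis using conjpow[OF x, of n] by (simp add: int_pow_int)
  qed
  then have "norm g = 0"
    by (metis c le_less_trans mult.commute norm_ge_zero order.order_iff_strict reals_Archimedean3 not_le)
  then show "f (inv b \<otimes> x \<otimes> b) = f x" by (simp add: g_def)
qed

end
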